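(* Let $a\in\mathbb{D}\setminus\{0\}$ and let $\alpha,\beta,\gamma\in\mathbb{C}$ with $\alpha\ne0$, $\gamma\neq0$. If $g=\alpha z+\beta+\gamma K_a$ is $\mathcal{H}^2_{\omega}$-inner, then $g(a)=0$, $g(0)=0$ (i.e. $\beta+\gamma=0$), and $g$ is a unimodular constant multiple of $$B_2(z)=\frac{(1-K_a(a))z-a(1-K_a(z))}{\sqrt{(K_a(a)-1)\big((K_a(a)-1)\omega_1-|a|^2\big)}},$$ where the denominator equals $\|(1-K_a(a))z-a(1-K_a)\|_{\mathcal{H}^2_{\omega}}$.
   Context: Let $\omega=\{\omega_n\}_{n\geq 0}$ be a sequence of positive reals with $\omega_0=1$ and $\lim_{n\to\infty}\omega_{n+1}/\omega_n=1$. $\mathcal{H}^2_{\omega}$ is the Hilbert space of power series $f(z)=\sum_{n\ge0}a_nz^n$ with $\|f\|^2=\sum_{n\geq0}\omega_n|a_n|^2<\infty$ and inner product $\langle f,g\rangle=\sum_n\omega_na_n\overline{b_n}$; its reproducing kernel on $\mathbb{D}$ is $K_\lambda(z)=\sum_{n\ge0}\overline{\lambda}^nz^n/\omega_n$. A function $f$ is $\mathcal{H}^2_{\omega}$-inner if $\|f\|=1$ and $\langle z^mf,f\rangle=0$ for all integers $m\geq1$. *)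

theory Defs
  imports "HOL-Analysis.Analysis"
begin

text \<open>Elements of the weighted Hardy space are represented by their Taylor
coefficient sequences f :: nat => complex, f n = n-th coefficient.\<close>

definition wnorm2 :: "(nat \<Rightarrow> real) \<Rightarrow> (nat \<Rightarrow> complex) \<Rightarrow> real" where
  "wnorm2 \<omega> f = (\<Sum>n. \<omega> n * (cmod (f n))^2)"

definition inH :: "(nat \<Rightarrow> real) \<Rightarrow> (nat \<Rightarrow> complex) \<Rightarrow> bool" where
  "inH \<omega> f \<longleftrightarrow> summable (\<lambda>n. \<omega> n * (cmod (f n))^2)"

definition winner :: "(nat \<Rightarrow> real) \<Rightarrow> (nat \<Rightarrow> complex) \<Rightarrow> (nat \<Rightarrow> complex) \<Rightarrow> complex" where
  "winner \<omega> f g = (\<Sum>n. complex_of_real (\<omega> n) * f n * cnj (g n))"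

definition zpow_mult :: "nat \<Rightarrow> (nat \<Rightarrow> complex) \<Rightarrow> nat \<Rightarrow> complex" where
  "zpow_mult m f n = (if m \<le> n then f (n - m) else 0)"

definition is_inner :: "(nat \<Rightarrow> real) \<Rightarrow> (nat \<Rightarrow> complex) \<Rightarrow> bool" where
  "is_inner \<omega> f \<longleftrightarrow> inH \<omega> f \<and> wnorm2 \<omega> f = 1 \<and>
     (\<forall>m::nat. m \<ge> 1 \<longrightarrow> winner \<omega> (zpow_mult m f) f = 0)"

definition kernel :: "(nat \<Rightarrow> real) \<Rightarrow> complex \<Rightarrow> nat \<Rightarrow> complex" where
  "kernel \<omega> l n = cnj l ^ n / complex_of_real (\<omega> n)"

definition peval :: "(nat \<Rightarrow> complex) \<Rightarrow> complex \<Rightarrow> complex" where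
  "peval f z = (\<Sum>n. f n * z ^ n)"

definition zcoef :: "nat \<Rightarrow> complex" where
  "zcoef n = (if n = 1 then 1 else 0)"

definition onecoef :: "nat \<Rightarrow> complex" where
  "onecoef n = (if n = 0 then 1 else 0)"

end

theory Submission
  imports Defs
begin

theorem mainTheorem14:
  fixes \<omega> :: "nat \<Rightarrow> real" and a \<alpha> \<beta> \<gamma> :: complex
  assumes pos: "\<And>n. \<omega> n > 0"
    and w0: "\<omega> 0 = 1"
    and ratio: "(\<lambda>n. \<omega> (Suc n) / \<omega> n) \<longlonglongrightarrow> 1"
    and aD: "cmod a < 1" and a0: "a \<noteq> 0"
    and al: "\<alpha> \<noteq> 0" and ga: "\<gamma> \<noteq> 0"
    and inner: "is_inner \<omega> (\<lambda>n. \<alpha> * zcoef n + \<beta> * onecoef n + \<gamma> * kernel \<omega> a n)"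
  shows "let g = (\<lambda>n. \<alpha> * zcoef n + \<beta> * onecoef n + \<gamma> * kernel \<omega> a n);
             Kaa = peval (kernel \<omega> a) a;
             N = (\<lambda>n. (1 - Kaa) * zcoef n - a * (onecoef n - kernel \<omega> a n));
             D = csqrt ((Kaa - 1) * ((Kaa - 1) * complex_of_real (\<omega> 1) - complex_of_real ((cmod a)^2)))
         in peval g a = 0 \<and> peval g 0 = 0 \<and> \<beta> + \<gamma> = 0 \<and>
            (\<exists>c. cmod c = 1 \<and> (\<forall>n. g n = c * (N n / D))) \<and>
            D = complex_of_real (sqrt (wnorm2 \<omega> N))"
proof -
  define k where "k = kernel \<omega> a"
  define g where "g = (\<lambda>n. \<alpha> * zcoef n + \<beta> * onecoef n + \<gamma> * k n)"
  define r where "r = (cmod a)^2"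
  define s where "s = (\<lambda>n. r^n / \<omega> n)"
  have wnz: "complex_of_real (\<omega> n) \<noteq> 0" for n using pos[of n] by simp
  have kn: "k n = cnj a ^ n / of_real (\<omega> n)" for n by (simp add: k_def kernel_def)
  have gn2: "n \<ge> 2 \<Longrightarrow> g n = \<gamma> * k n" for n by (simp add: g_def zcoef_def onecoef_def)
  have g0: "g 0 = \<beta> + \<gamma>" by (simp add: g_def zcoef_def onecoef_def kn w0)
  have g1: "g 1 = \<alpha> + \<gamma> * cnj a / of_real (\<omega> 1)" by (simp add: g_def zcoef_def onecoef_def kn)
  have aca: "cnj a ^ n * a ^ n = of_real (r ^ n)" for n
  proof -
    have "cnj a ^ n * a ^ n = (a * cnj a) ^ n" by (simp add: power_mult_distrib mult.commute)
    also have "\<dots> = of_real (r ^ n)" by (simp add: complex_norm_square[symmetric] r_def)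
    finally show ?thesis .
  qed
  have ka: "k n * a^n = of_real (s n)" for n
    using aca[of n] by (simp add: kn s_def)
  have ck: "of_real (\<omega> n) * cnj (k n) = a ^ n" for n
    using wnz[of n] by (simp add: kn)
  have cnorm: "\<omega> n * (cmod (c * k n))^2 = (cmod c)^2 * s n" for n c
  proof -
    have hk: "cmod a ^ n = \<omega> n * cmod (k n)" using pos[of n] by (simp add: kn norm_divide norm_power)
    have "r ^ n = (cmod a ^ n)^2" by (simp add: r_def flip: power_mult) (simp add: mult.commute power_mult)
    then have "r ^ n = (\<omega> n * cmod (k n))^2" using hk by simp
    then show ?thesis using pos[of n]
      by (simp add: norm_mult s_def power_mult_distrib power2_eq_square field_simps)
  qed
  from inner have inH: "summable (\<lambda>n. \<omega> n * (cmod (g n))^2)" and W1: "wnorm2 \<omega> g = 1"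
    and orth: "\<And>m. m\<ge>1 \<Longrightarrow> winner \<omega> (zpow_mult m g) g = 0"
    by (auto simp: is_inner_def inH_def g_def k_def)
  have ssum: "summable s"
  proof -
    have "summable (\<lambda>n. \<omega> (n+2) * (cmod (g (n+2)))^2)" using inH by (subst summable_iff_shift)
    moreover have "\<omega> (n+2) * (cmod (g (n+2)))^2 = (cmod \<gamma>)^2 * s (n+2)" for n
      using cnorm gn2 by simp
    ultimately have "summable (\<lambda>n. (cmod \<gamma>)^2 * s (n+2))" by simp
    then have "summable (\<lambda>n. s (n+2))" using ga by simp
    then show ?thesis by (subst (asm) summable_iff_shift)
  qed
  define Ks where "Ks = suminf s"
  have sKs: "s sums Ks" using ssum by (simp add: Ks_def summable_sums)
  have kaser: "(\<lambda>n. k n * a^n) sums of_real Ks" using sKs by (simp add: ka sums_of_real_iff)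
  have Kaa: "peval k a = of_real Ks" using kaser by (metis peval_def sums_unique)
  define G where "G = \<alpha> * a + \<beta> + \<gamma> * of_real Ks"
  have gser: "(\<lambda>n. g n * a^n) sums G"
  proof -
    have e: "(\<lambda>n. g n * a^n) = (\<lambda>n. (if n = 1 then \<alpha> * a^n else 0) + (if n = 0 then \<beta> * a^n else 0) + \<gamma> * (k n * a^n))"
      by (auto simp: g_def zcoef_def onecoef_def algebra_simps)
    have "(\<lambda>n. (if n = 1 then \<alpha> * a^n else 0) + (if n = 0 then \<beta> * a^n else 0) + \<gamma> * (k n * a^n)) sums (\<alpha> * a^1 + \<beta> * a^0 + \<gamma> * of_real Ks)"
      by (intro sums_add sums_single sums_mult kaser)
    then show ?thesis by (simp add: e G_def)
  qed
  have pga: "peval g a = G" using gser by (metis peval_def sums_unique)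
  have s2: "(\<lambda>n. of_real (\<omega> n) * zpow_mult 2 g n * cnj (g n)) sums (cnj \<gamma> * a^2 * G)"
  proof -
    have "(\<lambda>i. of_real (\<omega> (i+2)) * zpow_mult 2 g (i+2) * cnj (g (i+2))) = (\<lambda>i. cnj \<gamma> * a^2 * (g i * a^i))"
    proof (rule ext)
      fix i
      have "of_real (\<omega> (i+2)) * zpow_mult 2 g (i+2) * cnj (g (i+2)) = g i * cnj \<gamma> * (of_real (\<omega> (i+2)) * cnj (k (i+2)))"
        by (simp add: zpow_mult_def gn2)
      also have "\<dots> = cnj \<gamma> * a^2 * (g i * a^i)" by (simp only: ck power_add) (simp add: algebra_simps)
      finally show "of_real (\<omega> (i+2)) * zpow_mult 2 g (i+2) * cnj (g (i+2)) = cnj \<gamma> * a^2 * (g i * a^i)" .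
    qed
    moreover have "(\<lambda>i. cnj \<gamma> * a^2 * (g i * a^i)) sums (cnj \<gamma> * a^2 * G)" by (intro sums_mult gser)
    ultimately have "(\<lambda>i. of_real (\<omega> (i+2)) * zpow_mult 2 g (i+2) * cnj (g (i+2))) sums (cnj \<gamma> * a^2 * G)" by simp
    then show ?thesis by (subst (asm) sums_zero_iff_shift) (auto simp: zpow_mult_def)
  qed
  then have "winner \<omega> (zpow_mult 2 g) g = cnj \<gamma> * a^2 * G" by (metis winner_def sums_unique)
  with orth[of 2] ga a0 have G0: "G = 0" by simp
  define c1 where "c1 = of_real (\<omega> 1) * g 0 * cnj (g 1) - cnj \<gamma> * a * g 0"
  have s1: "(\<lambda>n. of_real (\<omega> n) * zpow_mult 1 g n * cnj (g n)) sums (cnj \<gamma> * a * G + c1)"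
  proof -
    have "(\<lambda>i. of_real (\<omega> (i+1)) * zpow_mult 1 g (i+1) * cnj (g (i+1))) = (\<lambda>i. cnj \<gamma> * a * (g i * a^i) + (if i = 0 then c1 else 0))"
    proof (rule ext)
      fix i
      show "of_real (\<omega> (i+1)) * zpow_mult 1 g (i+1) * cnj (g (i+1)) = cnj \<gamma> * a * (g i * a^i) + (if i = 0 then c1 else 0)"
      proof (cases "i = 0")
        case True then show ?thesis by (simp add: zpow_mult_def c1_def)
      next
        case False
        have "of_real (\<omega> (i+1)) * zpow_mult 1 g (i+1) * cnj (g (i+1)) = g i * cnj \<gamma> * (of_real (\<omega> (i+1)) * cnj (k (i+1)))"
          using False by (simp add: zpow_mult_def gn2)
        also have "\<dots> = cnj \<gamma> * a * (g i * a^i)" by (simp only: ck power_add) (simp add: algebra_simps)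
        finally show ?thesis using False by simp
      qed
    qed
    moreover have "(\<lambda>i. cnj \<gamma> * a * (g i * a^i) + (if i = 0 then c1 else 0)) sums (cnj \<gamma> * a * G + c1)"
      by (intro sums_add sums_mult gser sums_single[of 0 "\<lambda>_. c1", simplified])
    ultimately have "(\<lambda>i. of_real (\<omega> (i+1)) * zpow_mult 1 g (i+1) * cnj (g (i+1))) sums (cnj \<gamma> * a * G + c1)" by simp
    then show ?thesis by (subst (asm) sums_zero_iff_shift) (auto simp: zpow_mult_def)
  qed
  then have "winner \<omega> (zpow_mult 1 g) g = cnj \<gamma> * a * G + c1" by (metis winner_def sums_unique)
  with orth[of 1] G0 have "c1 = 0" by simp
  moreover have cg1: "of_real (\<omega> 1) * cnj (g 1) = of_real (\<omega> 1) * cnj \<alpha> + cnj \<gamma> * a"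
    unfolding g1 using wnz[of 1] by (simp add: field_simps)
  moreover have "c1 = g 0 * (of_real (\<omega> 1) * cnj (g 1)) - cnj \<gamma> * a * g 0" by (simp add: c1_def algebra_simps)
  ultimately have "of_real (\<omega> 1) * g 0 * cnj \<alpha> = 0" by (auto simp: algebra_simps)
  then have gz: "g 0 = 0" using wnz[of 1] al by simp
  then have bg: "\<beta> + \<gamma> = 0" using g0 by simp
  have k0: "k 0 = 1" by (simp add: kn w0)
  have ak1: "a * k 1 = of_real (r / \<omega> 1)"
    using ka[of 1] by (simp add: s_def mult.commute)
  have ak1': "a * k (Suc 0) = of_real r / of_real (\<omega> (Suc 0))" using ak1 by simp
  have s0: "s 0 = 1" by (simp add: s_def w0)
  have s1v: "s 1 = r / \<omega> 1" by (simp add: s_def)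
  have alpha: "\<alpha> * a = \<gamma> * (1 - of_real Ks)" using G0 bg unfolding G_def
    by (simp add: algebra_simps) (metis add_eq_0_iff add.commute)
  define N where "N = (\<lambda>n. (1 - peval k a) * zcoef n - a * (onecoef n - k n))"
  have Nge2: "n \<ge> 2 \<Longrightarrow> N n = a * k n" for n by (simp add: N_def zcoef_def onecoef_def)
  have N0: "N 0 = 0" by (simp add: N_def zcoef_def onecoef_def k0)
  have N1: "N 1 = of_real (1 - Ks + r / \<omega> 1)" by (simp add: N_def zcoef_def onecoef_def Kaa ak1')
  have gN: "g n = (\<gamma> / a) * N n" for n
  proof -
    consider "n = 0" | "n = 1" | "n \<ge> 2" by linarith
    then show ?thesis
    proof cases
      case 1 then show ?thesis using gz N0 by simp
    next
      case 2
      have "g 1 = \<alpha> + \<gamma> * k 1" by (simp add: g_def zcoef_def onecoef_def)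
      also have "\<dots> = (\<gamma> / a) * N 1"
        unfolding N_def using alpha a0 by (simp add: zcoef_def onecoef_def Kaa field_simps)
      finally show ?thesis using 2 by simp
    next
      case 3 then show ?thesis using gn2 Nge2 a0 by simp
    qed
  qed
  have NT: "\<omega> n * (cmod (N n))^2 = (cmod (a/\<gamma>))^2 * (\<omega> n * (cmod (g n))^2)" for n
  proof -
    have "N n = (a / \<gamma>) * g n" using gN ga a0 by simp
    then show ?thesis by (simp add: norm_mult norm_divide power_mult_distrib power_divide)
  qed
  have Wv: "wnorm2 \<omega> N = (cmod (a/\<gamma>))^2"
    unfolding wnorm2_def NT using suminf_mult[OF inH, of "(cmod (a/\<gamma>))^2"] W1 by (simp add: wnorm2_def)
  define T where "T = Ks - 1 - r / \<omega> 1"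
  have Nser: "(\<lambda>n. \<omega> n * (cmod (N n))^2) sums (r * Ks + (- r) + (\<omega> 1 * T^2 - r * (r / \<omega> 1)))"
  proof -
    have e: "(\<lambda>n. \<omega> n * (cmod (N n))^2) = (\<lambda>n. r * s n + (if n = 0 then - r else 0) + (if n = 1 then \<omega> 1 * T^2 - r * (r / \<omega> 1) else 0))"
    proof (rule ext)
      fix n :: nat
      consider "n = 0" | "n = 1" | "n \<ge> 2" by linarith
      then show "\<omega> n * (cmod (N n))^2 = r * s n + (if n = 0 then - r else 0) + (if n = 1 then \<omega> 1 * T^2 - r * (r / \<omega> 1) else 0)"
      proof cases
        case 1 then show ?thesis by (simp add: N0 s0)
      next
        case 2
        have "(cmod (N 1))^2 = T^2" unfolding N1 T_def norm_of_real by (simp add: power2_eq_square algebra_simps)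
        then show ?thesis using 2 by (simp add: s_def)
      next
        case 3
        then show ?thesis using cnorm[of n a] by (simp add: Nge2 r_def)
      qed
    qed
    have "(\<lambda>n. r * s n + (if n = 0 then - r else 0) + (if n = 1 then \<omega> 1 * T^2 - r * (r / \<omega> 1) else 0)) sums (r * Ks + (- r) + (\<omega> 1 * T^2 - r * (r / \<omega> 1)))"
      by (intro sums_add sums_mult sKs sums_single[of 0 "\<lambda>_. - r", simplified] sums_single[of 1 "\<lambda>_. \<omega> 1 * T^2 - r * (r / \<omega> 1)"])
    then show ?thesis by (simp only: e)
  qed
  define W where "W = wnorm2 \<omega> N"
  have W2: "W = r * Ks - r + \<omega> 1 * T^2 - r * (r / \<omega> 1)"
    using Nser by (simp add: W_def wnorm2_def sums_unique[symmetric])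
  have Wpos: "W > 0" using Wv a0 ga by (simp add: W_def)
  have arg: "(peval k a - 1) * ((peval k a - 1) * complex_of_real (\<omega> 1) - complex_of_real ((cmod a)^2)) = of_real W"
  proof -
    have "(Ks - 1) * ((Ks - 1) * \<omega> 1 - r) = W"
      unfolding W2 T_def using pos[of 1] by (simp add: field_simps power2_eq_square)
    then have "of_real ((Ks - 1) * ((Ks - 1) * \<omega> 1 - r)) = complex_of_real W" by simp
    then show ?thesis by (simp add: Kaa r_def[symmetric])
  qed
  define D where "D = csqrt ((peval k a - 1) * ((peval k a - 1) * complex_of_real (\<omega> 1) - complex_of_real ((cmod a)^2)))"
  have Dv: "D = of_real (sqrt W)" unfolding D_def arg using Wpos by (simp add: csqrt_of_real)
  have Dnz: "D \<noteq> 0" using Dv Wpos by simp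
  define c where "c = (\<gamma> / a) * D"
  have cm: "cmod c = 1"
  proof -
    have "sqrt W = cmod (a / \<gamma>)" using Wv by (simp add: W_def)
    then show ?thesis using a0 ga by (simp add: c_def Dv norm_mult norm_divide)
  qed
  have gc: "g n = c * (N n / D)" for n using gN Dnz by (simp add: c_def)
  have main: "peval g a = 0 \<and> peval g 0 = 0 \<and> \<beta> + \<gamma> = 0 \<and>
            (\<exists>c. cmod c = 1 \<and> (\<forall>n. g n = c * (N n / D))) \<and> D = complex_of_real (sqrt (wnorm2 \<omega> N))"
  proof (intro conjI)
    show "peval g a = 0" using pga G0 by simp
    show "peval g 0 = 0" using gz by (simp add: peval_def)
    show "\<beta> + \<gamma> = 0" by (rule bg)
    show "\<exists>c. cmod c = 1 \<and> (\<forall>n. g n = c * (N n / D))" using cm gc by blast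
    show "D = complex_of_real (sqrt (wnorm2 \<omega> N))" using Dv by (simp add: W_def)
  qed
  show ?thesis unfolding Let_def using main unfolding g_def N_def D_def k_def .
qed
end
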